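(* Let $n\ge 1$ and let $\|\cdot\|_L$ be one of the vectorized norms $L_1,L_2,L_\infty$ on $\mathbb{R}^{n\times n}$. Let $M\subset\mathbb{R}^{n\times n}$ be a measurable set of finite positive Lebesgue measure containing an open ball $B(a,c)$ whose radius $c$ is large enough that $B(a,c)$ contains a singular matrix of rank $n-1$, and let $S_M$ be the set of singular matrices in $M$. Let $F:\mathbb{R}^{n\times n}\to\mathbb{R}^{n\times n}$ be any polynomial Lipschitz continuous function. Then for every $K\ge n^2$ and every real $K'\ge 0$, $$\mathbb{E}_{x\sim M}\left[\frac{\|\mathrm{Inv}(x)-F(x)\|_L^K}{\|x\|_L^{K'}}\right]=\frac{1}{m(M)}\int_{M\setminus S_M}\frac{\|\mathrm{Inv}(x)-F(x)\|_L^K}{\|x\|_L^{K'}}\,dm(x)=+\infty.$$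
   Context: $\mathrm{Inv}(x)=x^{-1}$ denotes matrix inversion, defined on invertible matrices; $S_M$ has Lebesgue measure zero. For $A=(a_{ij})\in\mathbb{R}^{n\times n}$ the norms are vectorized: $\|A\|_{L_1}=\sum_{i,j}|a_{ij}|$, $\|A\|_{L_2}=(\sum_{i,j}|a_{ij}|^2)^{1/2}$, $\|A\|_{L_\infty}=\max_{i,j}|a_{ij}|$; $\mathbb{R}^{n\times n}$ is identified with $\mathbb{R}^{n^2}$ with Lebesgue measure $m$. A function $f:\mathbb{R}^{n_1}\to\mathbb{R}^{n_2}$ is called polynomial Lipschitz continuous with respect to norms $\|\cdot\|_{L^+}$, $\|\cdot\|_{L^*}$ (chosen among $L_1,L_2,L_\infty$) if there exist a nonnegative integer $N$ and real polynomials $f_0,\dots,f_N$ in two variables such that for all $x,y$, $\|f(x)-f(y)\|_{L^*}\le \sum_{i=0}^{N} f_i(\|x\|_{L^+},\|y\|_{L^+})\|x-y\|_{L^+}^{i}$. *)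

theory Defs
  imports "HOL-Analysis.Analysis"
begin

datatype normL = L1 | L2 | Linf

definition mnorm :: "normL \<Rightarrow> real^'n^'n \<Rightarrow> real" where
  "mnorm L A = (case L of
      L1 \<Rightarrow> (\<Sum>i\<in>UNIV. \<Sum>j\<in>UNIV. \<bar>A $ i $ j\<bar>)
    | L2 \<Rightarrow> sqrt (\<Sum>i\<in>UNIV. \<Sum>j\<in>UNIV. \<bar>A $ i $ j\<bar> ^ 2)
    | Linf \<Rightarrow> Max {\<bar>A $ i $ j\<bar> | i j. True})"

definition poly2 :: "nat \<Rightarrow> (nat \<Rightarrow> nat \<Rightarrow> real) \<Rightarrow> real \<Rightarrow> real \<Rightarrow> real" where
  "poly2 D c s t = (\<Sum>j\<le>D. \<Sum>k\<le>D. c j k * s ^ j * t ^ k)"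

definition poly_lipschitz ::
  "normL \<Rightarrow> normL \<Rightarrow> (real^'n^'n \<Rightarrow> real^'n^'n) \<Rightarrow> bool" where
  "poly_lipschitz Lp Ls F \<longleftrightarrow>
     (\<exists>(N::nat) (D::nat) (c::nat \<Rightarrow> nat \<Rightarrow> nat \<Rightarrow> real).
        \<forall>x y. mnorm Ls (F x - F y)
          \<le> (\<Sum>i\<le>N. poly2 D (c i) (mnorm Lp x) (mnorm Lp y) * mnorm Lp (x - y) ^ i))"

end

theory Submission
  imports Defs
begin

definition rowf :: "'n::finite \<Rightarrow> real^'n^'n \<Rightarrow> real^'n^'n" where
  "rowf k A = A - axis k (A$k) + (\<Sum>j\<in>UNIV-{k}. (A$k$j) *\<^sub>R axis k (A$j))"

lemma bl_nth2: "bounded_linear (\<lambda>A::real^'n^'m. A$i$j)"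
  using bounded_linear_compose[OF bounded_linear_vec_nth[of j] bounded_linear_vec_nth[of i]] by (simp add: o_def)

lemma bl_axis_row: "bounded_linear (\<lambda>A::real^'n^'n. axis k (A$j))"
  by (rule linear_conv_bounded_linear[THEN iffD1]) (auto simp: linear_iff axis_def vec_eq_iff)

lemma rowf_poly: fixes k :: "'n::finite" shows "polynomial_function (rowf k)"
proof -
  have "polynomial_function (\<lambda>A::real^'n^'n. A - axis k (A$k) + (\<Sum>j\<in>UNIV-{k}. (A$k$j) *\<^sub>R axis k (A$j)))"
    apply (intro polynomial_function_add polynomial_function_diff polynomial_function_sum polynomial_function_mult)
    apply (auto intro!: polynomial_function_bounded_linear bl_axis_row bl_nth2)
    done
  then show ?thesis unfolding rowf_def[abs_def] .
qed

lemma rowf_row: "rowf k A $ i = (if i = k then (\<Sum>j\<in>UNIV-{k}. (A$k$j) *\<^sub>R A$j) else A$i)"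
  unfolding rowf_def by (auto simp: axis_def sum_component vec_eq_iff)

lemma sing_cover:
  fixes x :: "real^'n^'n"
  assumes "\<not> invertible x"
  shows "\<exists>k. x \<in> rowf k ` {A. A$k$k = 0}"
proof -
  have "det (transpose x) = 0" using assms invertible_det_nz by auto
  then have "rank (transpose x) \<noteq> CARD('n)" using det_eq_0_rank[of "transpose x"] by simp
  then obtain c where c: "c \<noteq> 0" "transpose x *v c = 0"
    using matrix_nonfull_linear_equations_eq by blast
  then obtain k where k: "c$k \<noteq> 0" by (metis vec_eq_iff zero_index)
  have sum0: "(\<Sum>i\<in>UNIV. c$i *\<^sub>R x$i) = 0"
    using c(2) by (simp add: vec_eq_iff matrix_vector_mult_def transpose_def sum_component mult.commute)
  define A where "A = (\<chi> i. if i = k then (\<chi> j. if j = k then 0 else - c$j / c$k) else x$i)"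
  have "(\<Sum>i\<in>UNIV. c$i *\<^sub>R x$i) = c$k *\<^sub>R x$k + (\<Sum>i\<in>UNIV-{k}. c$i *\<^sub>R x$i)"
    by (simp add: sum.remove)
  then have h: "c$k *\<^sub>R x$k = - (\<Sum>i\<in>UNIV-{k}. c$i *\<^sub>R x$i)"
    using sum0 by (simp add: eq_neg_iff_add_eq_0)
  have "x$k = (1/c$k) *\<^sub>R (c$k *\<^sub>R x$k)" using k by simp
  also have "\<dots> = (\<Sum>i\<in>UNIV-{k}. (- c$i / c$k) *\<^sub>R x$i)"
    unfolding h scaleR_minus_right scaleR_sum_right by (simp add: sum_negf[symmetric])
  finally have xk: "x$k = (\<Sum>i\<in>UNIV-{k}. (- c$i / c$k) *\<^sub>R x$i)" .
  have "rowf k A = x"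
    unfolding vec_eq_iff[of "rowf k A"] rowf_row
  proof (intro allI)
    fix i show "(if i = k then \<Sum>j\<in>UNIV - {k}. A $ k $ j *\<^sub>R A $ j else A $ i) = x $ i"
    proof (cases "i = k")
      case True
      have "(\<Sum>j\<in>UNIV - {k}. A $ k $ j *\<^sub>R A $ j) = (\<Sum>j\<in>UNIV-{k}. (- c$j / c$k) *\<^sub>R x$j)"
        by (rule sum.cong) (auto simp: A_def)
      then show ?thesis using True xk by simp
    qed (simp add: A_def)
  qed
  moreover have "A$k$k = 0" by (simp add: A_def)
  ultimately show ?thesis by blast
qed

lemma neg_sing: "negligible {x::real^'n^'n. \<not> invertible x}"
proof -
  have hyp: "negligible {A::real^'n^'n. A$k$k = 0}" for k
  proof -
    have "{A::real^'n^'n. A$k$k = 0} = {A. axis k (axis k 1) \<bullet> A = 0}"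
      by (simp add: inner_axis')
    moreover have "axis k (axis k (1::real)) \<noteq> 0" by (simp add: axis_eq_0_iff)
    ultimately show ?thesis using negligible_hyperplane by metis
  qed
  have img: "negligible (rowf k ` {A::real^'n^'n. A$k$k = 0})" for k
    by (rule negligible_differentiable_image_negligible[OF order_refl hyp differentiable_on_polynomial_function[OF rowf_poly]])
  have "negligible (\<Union>k\<in>UNIV. rowf k ` {A::real^'n^'n. A$k$k = 0})"
    by (rule negligible_Union) (auto intro: img)
  moreover have "{x::real^'n^'n. \<not> invertible x} \<subseteq> (\<Union>k\<in>UNIV. rowf k ` {A::real^'n^'n. A$k$k = 0})"
    using sing_cover by blast
  ultimately show ?thesis using negligible_subset by blast
qed

lemma comp_le_norm: "\<bar>(A::real^'n^'m)$i$j\<bar> \<le> norm A"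
  using component_le_norm_cart[of "A$i" j] Finite_Cartesian_Product.norm_nth_le[of A i] by linarith

lemma L1_le: "(\<Sum>i\<in>UNIV. \<Sum>j\<in>UNIV. \<bar>(A::real^'n^'n)$i$j\<bar>) \<le> real CARD('n) * real CARD('n) * norm A"
proof -
  have "(\<Sum>i\<in>UNIV. \<Sum>j\<in>UNIV. \<bar>A$i$j\<bar>) \<le> (\<Sum>i\<in>(UNIV::'n set). \<Sum>j\<in>(UNIV::'n set). norm A)"
    by (intro sum_mono comp_le_norm)
  then show ?thesis by (simp add: mult.assoc)
qed

lemma norm_le_L1: "norm (A::real^'n^'m) \<le> (\<Sum>i\<in>UNIV. \<Sum>j\<in>UNIV. \<bar>A$i$j\<bar>)"
proof -
  have "norm A = L2_set (\<lambda>i. norm (A$i)) UNIV" by (rule norm_vec_def)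
  also have "\<dots> \<le> (\<Sum>i\<in>UNIV. norm (A$i))" by (rule L2_set_le_sum) simp
  also have "\<dots> \<le> (\<Sum>i\<in>UNIV. \<Sum>j\<in>UNIV. \<bar>A$i$j\<bar>)"
    by (intro sum_mono) (simp add: norm_le_l1_cart)
  finally show ?thesis .
qed

lemma norm_L2: "norm (A::real^'n^'m) = sqrt (\<Sum>i\<in>UNIV. \<Sum>j\<in>UNIV. \<bar>A$i$j\<bar> ^ 2)"
  unfolding norm_vec_def L2_set_def by (simp add: sum_nonneg)

lemma mnorm_L2: "mnorm L2 A = norm A"
  by (simp add: mnorm_def norm_L2)

lemma Max_fin: "finite {\<bar>(A::real^'n^'m)$i$j\<bar> | i j. True}"
proof -
  have "{\<bar>A$i$j\<bar> | i j. True} = (\<lambda>(i,j). \<bar>A$i$j\<bar>) ` UNIV" by auto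
  then show ?thesis by simp
qed

lemma Max_ge': "\<bar>(A::real^'n^'m)$i$j\<bar> \<le> Max {\<bar>A$i$j\<bar> | i j. True}"
  by (rule Max_ge[OF Max_fin]) blast

lemma Max_in': "\<exists>i j. Max {\<bar>(A::real^'n^'m)$i$j\<bar> | i j. True} = \<bar>A$i$j\<bar>"
proof -
  have "Max {\<bar>A$i$j\<bar> | i j. True} \<in> {\<bar>A$i$j\<bar> | i j. True}"
    by (rule Max_in[OF Max_fin]) blast
  then show ?thesis by blast
qed

lemma le_scale: "(a::real) \<le> b \<Longrightarrow> 0 \<le> b \<Longrightarrow> 1 \<le> c \<Longrightarrow> a \<le> c * b"
proof -
  assume h: "a \<le> b" "0 \<le> b" "1 \<le> c"
  have "1 * b \<le> c * b" by (rule mult_right_mono[OF h(3) h(2)])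
  then show ?thesis using h(1) by linarith
qed

lemma one_le_nsq: "1 \<le> real CARD('n::finite) * real CARD('n)"
proof -
  have "0 < CARD('n)" by simp
  then have "1 \<le> real CARD('n)" by linarith
  then have "1 * 1 \<le> real CARD('n) * real CARD('n)" by (rule mult_mono) auto
  then show ?thesis by simp
qed

lemma mnorm_le: "mnorm L (A::real^'n^'n) \<le> real CARD('n) * real CARD('n) * norm A"
proof (cases L)
  case L1 then show ?thesis using L1_le by (simp add: mnorm_def)
next
  case L2
  have "norm A \<le> real CARD('n) * real CARD('n) * norm A"
    by (rule le_scale[OF order_refl norm_ge_zero one_le_nsq])
  then show ?thesis using L2 by (simp add: mnorm_L2)
next
  case Linf
  obtain i j where "Max {\<bar>A$i$j\<bar> | i j. True} = \<bar>A$i$j\<bar>" using Max_in' by blast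
  then show ?thesis using Linf le_scale[OF comp_le_norm[of A i j] norm_ge_zero one_le_nsq]
    by (simp add: mnorm_def)
qed

lemma norm_le_mnorm: "norm (A::real^'n^'n) \<le> real CARD('n) * real CARD('n) * mnorm L A"
proof (cases L)
  case L1
  have "0 \<le> (\<Sum>i\<in>UNIV. \<Sum>j\<in>UNIV. \<bar>A$i$j\<bar>)" by (simp add: sum_nonneg)
  then show ?thesis using L1 le_scale[OF norm_le_L1[of A] _ one_le_nsq]
    by (simp add: mnorm_def)
next
  case L2
  then show ?thesis using le_scale[OF order_refl norm_ge_zero one_le_nsq, of "norm A"]
    by (simp add: mnorm_L2 L2)
next
  case Linf
  have "norm A \<le> (\<Sum>i\<in>UNIV. \<Sum>j\<in>UNIV. \<bar>A$i$j\<bar>)" by (rule norm_le_L1)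
  also have "\<dots> \<le> (\<Sum>i\<in>(UNIV::'n set). \<Sum>j\<in>(UNIV::'n set). Max {\<bar>A$i$j\<bar> | i j. True})"
    by (intro sum_mono Max_ge')
  finally show ?thesis using Linf by (simp add: mnorm_def mult.assoc)
qed

lemma mnorm_nonneg: "0 \<le> mnorm L (A::real^'n^'n)"
proof -
  have "0 \<le> real CARD('n) * real CARD('n) * mnorm L A"
    using norm_le_mnorm[of A L] norm_ge_zero order_trans by blast
  moreover have "0 < real CARD('n) * real CARD('n)" by simp
  ultimately show ?thesis by (simp add: zero_le_mult_iff)
qed

lemma mnorm_triangle: "mnorm L ((x::real^'n^'n) + y) \<le> mnorm L x + mnorm L y"
proof (cases L)
  case L1
  have "(\<Sum>i\<in>UNIV. \<Sum>j\<in>UNIV. \<bar>(x+y)$i$j\<bar>) \<le> (\<Sum>i\<in>UNIV. \<Sum>j\<in>UNIV. \<bar>x$i$j\<bar> + \<bar>y$i$j\<bar>)"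
    by (intro sum_mono) (simp add: abs_triangle_ineq)
  then show ?thesis using L1 by (simp add: mnorm_def sum.distrib)
next
  case L2
  then show ?thesis by (simp add: mnorm_L2 norm_triangle_ineq)
next
  case Linf
  obtain i j where "Max {\<bar>(x+y)$i$j\<bar> | i j. True} = \<bar>(x+y)$i$j\<bar>" using Max_in' by blast
  moreover have "\<bar>(x+y)$i$j\<bar> \<le> \<bar>x$i$j\<bar> + \<bar>y$i$j\<bar>" by (simp add: abs_triangle_ineq)
  ultimately show ?thesis using Linf Max_ge'[of x i j] Max_ge'[of y i j] by (simp add: mnorm_def)
qed

lemma sum_ind_le:
  fixes w :: "nat \<Rightarrow> ennreal"
  assumes disj: "\<And>k l. k \<noteq> l \<Longrightarrow> A k \<inter> A l = {}"
    and le: "\<And>k. x \<in> A k \<Longrightarrow> w k \<le> g"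
  shows "(\<Sum>k<m. w k * indicator (A k) x) \<le> g"
proof (cases "\<exists>k<m. x \<in> A k")
  case True
  then obtain k0 where k0: "k0 < m" "x \<in> A k0" by blast
  have "(\<Sum>k<m. w k * indicator (A k) x) = (\<Sum>k<m. if k = k0 then w k0 else 0)"
  proof (rule sum.cong)
    fix k assume "k \<in> {..<m}"
    show "w k * indicator (A k) x = (if k = k0 then w k0 else 0)"
      using disj[of k k0] k0 by (auto simp: indicator_def)
  qed simp
  also have "\<dots> = w k0" using k0 by simp
  finally show ?thesis using le[OF k0(2)] by simp
next
  case False
  then have "(\<Sum>k<m. w k * indicator (A k) x) = 0" by (auto simp: indicator_def)
  then show ?thesis by simp
qed

lemma ball_integral_inf:
  fixes x0 :: "'a::euclidean_space"
  assumes dpos: "\<delta> > 0" and Cpos: "C > 0"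
  shows "(\<integral>\<^sup>+ x. ennreal (C / dist x x0 ^ DIM('a)) * indicator (ball x0 \<delta> - {x0}) x \<partial>lebesgue) = \<infinity>"
    (is "?I = _")
proof -
  define D where "D = DIM('a)"
  define r where "r k = \<delta> / 2 ^ k" for k :: nat
  define A where "A k = ball x0 (r k) - ball x0 (r (Suc k))" for k
  define u where "u = measure lborel (ball (0::'a) 1)"
  have upos: "u > 0" unfolding u_def by (rule content_ball_pos) simp
  have rpos: "r k > 0" for k using dpos by (simp add: r_def)
  have rmono: "r l \<le> r k" if "k \<le> l" for k l
    unfolding r_def using dpos that by (intro divide_left_mono) (auto intro: power_increasing)
  have rSuc: "r (Suc k) = r k / 2" for k by (simp add: r_def)
  have disj: "A k \<inter> A l = {}" if "k \<noteq> l" for k l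
  proof -
    have *: "A k \<inter> A l = {}" if "k < l" for k l
      using rmono[of "Suc k" l] that by (auto simp: A_def)
    show ?thesis using that *[of k l] *[of l k] by (cases "k < l") auto
  qed
  have Asub: "A k \<subseteq> ball x0 \<delta> - {x0}" for k
    using rmono[of 0 k] rpos[of "Suc k"] by (auto simp: A_def r_def)
  have Ameas: "A k \<in> sets lebesgue" for k by (auto simp: A_def)
  have ball_em: "emeasure lebesgue (ball x0 s) = ennreal (s ^ D * u)" if "s \<ge> 0" for s
  proof -
    have "emeasure lebesgue (ball x0 s) = ennreal (measure lborel (ball x0 s))"
      using emeasure_lborel_ball_finite[of x0 s] by (subst emeasure_eq_ennreal_measure) auto
    then show ?thesis using content_ball_conv_unit_ball[OF that, of x0] by (simp add: u_def D_def)
  qed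
  define c2 where "c2 = C * (1 - 1 / 2 ^ D) * u"
  have D1: "D \<ge> 1" unfolding D_def by (simp add: DIM_positive Suc_le_eq)
  have c2pos: "c2 > 0"
  proof -
    have "(1::real) / 2 ^ D < 1" using D1 by simp
    then show ?thesis unfolding c2_def using Cpos upos by simp
  qed
  have termk: "ennreal (C / r k ^ D) * emeasure lebesgue (A k) = ennreal c2" for k
  proof -
    have "emeasure lebesgue (A k) = emeasure lebesgue (ball x0 (r k)) - emeasure lebesgue (ball x0 (r (Suc k)))"
      unfolding A_def
      using emeasure_lborel_ball_finite[of x0 "r (Suc k)"] rmono[of k "Suc k"]
      by (intro emeasure_Diff) auto
    also have "\<dots> = ennreal (r k ^ D * u - r (Suc k) ^ D * u)"
      unfolding ball_em[OF less_imp_le[OF rpos[of k]]] ball_em[OF less_imp_le[OF rpos[of "Suc k"]]]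
      using rpos[of "Suc k"] upos by (intro ennreal_minus) simp
    finally have "ennreal (C / r k ^ D) * emeasure lebesgue (A k) = ennreal (C / r k ^ D * (r k ^ D * u - r (Suc k) ^ D * u))"
      using Cpos rpos[of k] ennreal_mult'[symmetric, of "C / r k ^ D"] by simp
    also have "C / r k ^ D * (r k ^ D * u - r (Suc k) ^ D * u) = c2"
      unfolding rSuc c2_def using rpos[of k] by (simp add: field_simps power_divide)
    finally show ?thesis .
  qed
  have lower: "ennreal (real m * c2) \<le> ?I" for m
  proof -
    have "ennreal (real m * c2) = (\<Sum>k<m. ennreal (C / r k ^ D) * emeasure lebesgue (A k))"
      using termk c2pos by (simp add: ennreal_of_nat_eq_real_of_nat ennreal_mult' flip: ennreal_of_nat_eq_real_of_nat)
    also have "\<dots> = (\<Sum>k<m. \<integral>\<^sup>+ x. ennreal (C / r k ^ D) * indicator (A k) x \<partial>lebesgue)"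
      by (simp add: nn_integral_cmult_indicator Ameas)
    also have "\<dots> = (\<integral>\<^sup>+ x. (\<Sum>k<m. ennreal (C / r k ^ D) * indicator (A k) x) \<partial>lebesgue)"
      by (rule nn_integral_sum[symmetric]) (intro borel_measurable_times_ennreal borel_measurable_const borel_measurable_indicator Ameas)
    also have "\<dots> \<le> ?I"
    proof (rule nn_integral_mono)
      fix x
      show "(\<Sum>k<m. ennreal (C / r k ^ D) * indicator (A k) x) \<le> ennreal (C / dist x x0 ^ DIM('a)) * indicator (ball x0 \<delta> - {x0}) x"
      proof (rule sum_ind_le[OF disj])
        fix k assume xA: "x \<in> A k"
        then have xin: "x \<in> ball x0 \<delta> - {x0}" using Asub by blast
        have dpos': "dist x x0 > 0" using xin by simp
        have "dist x x0 < r k" using xA by (simp add: A_def dist_commute)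
        then have "dist x x0 ^ D \<le> r k ^ D" using dpos' by (intro power_mono) auto
        then have "C / r k ^ D \<le> C / dist x x0 ^ D"
          using Cpos dpos' rpos[of k] by (intro divide_left_mono) auto
        then show "ennreal (C / r k ^ D) \<le> ennreal (C / dist x x0 ^ DIM('a)) * indicator (ball x0 \<delta> - {x0}) x"
          using xin by (simp add: D_def ennreal_leI)
      qed
    qed
    finally show ?thesis .
  qed
  show ?thesis
  proof (rule ccontr)
    assume "?I \<noteq> \<infinity>"
    then obtain t where t: "?I = ennreal t" "t \<ge> 0" by (cases ?I) auto
    obtain m :: nat where m: "t / c2 < m" using reals_Archimedean2 by blast
    then have "t < real m * c2" using c2pos by (simp add: field_simps)
    moreover have "real m * c2 \<le> t" using lower[of m] t c2pos by (simp add: ennreal_le_iff)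
    ultimately show False by simp
  qed
qed

lemma mv_le: "norm ((A::real^'n^'n) *v x) \<le> real CARD('n) * real CARD('n) * norm A * norm x"
proof -
  have "norm (A *v x) \<le> onorm ((*v) A) * norm x" by (rule onorm) simp
  also have "\<dots> \<le> (\<Sum>i\<in>UNIV. \<Sum>j\<in>UNIV. \<bar>A $ i $ j\<bar>) * norm x"
    by (intro mult_right_mono onorm_le_matrix_component_sum) simp
  also have "\<dots> \<le> real CARD('n) * real CARD('n) * norm A * norm x"
    by (intro mult_right_mono L1_le) simp
  finally show ?thesis .
qed

lemma matrix_inv_left': "invertible (A::real^'n^'n) \<Longrightarrow> matrix_inv A ** A = mat 1"
  unfolding invertible_def matrix_inv_def by (rule someI2_ex) auto

lemma DIM_mat: "real DIM(real^'n^'n) = real CARD('n) * real CARD('n)"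
  by simp

theorem theoremA1:
  fixes L Lp Ls :: normL
    and M :: "(real^'n^'n) set"
    and F :: "real^'n^'n \<Rightarrow> real^'n^'n"
    and K K' :: real
  assumes M_meas: "M \<in> sets lebesgue"
    and M_fin: "emeasure lebesgue M < \<infinity>"
    and M_pos: "emeasure lebesgue M > 0"
    and M_ball: "\<exists>a c. c > 0 \<and> {x. mnorm L (x - a) < c} \<subseteq> M \<and>
                   (\<exists>x. mnorm L (x - a) < c \<and> rank x = CARD('n) - 1)"
    and F_lip: "poly_lipschitz Lp Ls F"
    and K_ge: "K \<ge> real (CARD('n) ^ 2)"
    and K'_ge: "K' \<ge> 0"
  shows "ennreal (1 / measure lebesgue M) *
           (\<integral>\<^sup>+ x \<in> (M - {x\<in>M. \<not> invertible x}).
              ennreal (mnorm L (matrix_inv x - F x) powr K / mnorm L x powr K') \<partial>lebesgue)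
         = \<infinity>"
proof -
  define nsq where "nsq = real CARD('n) * real CARD('n)"
  have nsq1: "1 \<le> nsq" unfolding nsq_def by (rule one_le_nsq)
  have Knsq: "nsq \<le> K" using K_ge by (simp add: nsq_def power2_eq_square)
  obtain a c x0 where c: "c > 0" and sub: "{x. mnorm L (x - a) < c} \<subseteq> M"
    and x0a: "mnorm L (x0 - a) < c" and rk: "rank x0 = CARD('n) - 1"
    using M_ball by blast
  have "0 < CARD('n)" by simp
  then have rkl: "rank x0 < CARD('n)" using rk by simp
  then obtain v where v: "v \<noteq> 0" "x0 *v v = 0"
    using matrix_nonfull_linear_equations_eq[of x0] by auto
  have nvpos: "norm v > 0" using v by simp
  define \<delta>0 where "\<delta>0 = (c - mnorm L (x0 - a)) / nsq"
  have d0pos: "\<delta>0 > 0" using x0a nsq1 by (simp add: \<delta>0_def)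
  have inM: "y \<in> M" if "norm (y - x0) < \<delta>0" for y
  proof -
    have "mnorm L (y - a) \<le> mnorm L (y - x0) + mnorm L (x0 - a)"
      using mnorm_triangle[of L "y - x0" "x0 - a"] by simp
    also have "mnorm L (y - x0) \<le> nsq * norm (y - x0)" using mnorm_le[of L "y - x0"] by (simp add: nsq_def)
    also have "nsq * norm (y - x0) < nsq * \<delta>0" using that nsq1 by simp
    also have "nsq * \<delta>0 = c - mnorm L (x0 - a)" using nsq1 by (simp add: \<delta>0_def)
    finally show ?thesis using sub by auto
  qed
  obtain N Dg cc where lip: "\<And>x y. mnorm Ls (F x - F y)
          \<le> (\<Sum>i\<le>N. poly2 Dg (cc i) (mnorm Lp x) (mnorm Lp y) * mnorm Lp (x - y) ^ i)"
    using F_lip unfolding poly_lipschitz_def by blast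
  define R where "R = norm x0 + 1"
  have R1: "R \<ge> 1" by (simp add: R_def)
  define P where "P = (\<lambda>p::real\<times>real. \<Sum>i\<le>N. poly2 Dg (cc i) (fst p) (mnorm Lp x0) * snd p ^ i)"
  have contP: "continuous_on UNIV P" unfolding P_def poly2_def by (intro continuous_intros)
  have "compact (P ` ({0..nsq*R} \<times> {0..nsq}))"
    by (intro compact_continuous_image continuous_on_subset[OF contP] compact_Times compact_Icc) auto
  then obtain B where B: "\<And>z. z \<in> P ` ({0..nsq*R} \<times> {0..nsq}) \<Longrightarrow> norm z \<le> B"
    using compact_imp_bounded bounded_iff by metis
  define B1 where "B1 = norm (F x0) + nsq * max B 0"
  have B1pos: "B1 \<ge> 0" using nsq1 by (simp add: B1_def)
  have Fb: "norm (F y) \<le> B1" if "norm (y - x0) < 1" for y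
  proof -
    have ny: "norm y \<le> R" using norm_triangle_sub[of y x0] that by (simp add: R_def)
    have "mnorm Lp y \<le> nsq * norm y" using mnorm_le[of Lp y] by (simp add: nsq_def)
    also have "\<dots> \<le> nsq * R" using ny nsq1 by simp
    finally have m1: "mnorm Lp y \<in> {0..nsq*R}" using mnorm_nonneg[of Lp y] by simp
    have "mnorm Lp (y - x0) \<le> nsq * norm (y - x0)" using mnorm_le[of Lp "y - x0"] by (simp add: nsq_def)
    also have "\<dots> \<le> nsq" using that nsq1 by simp
    finally have m2: "mnorm Lp (y - x0) \<in> {0..nsq}" using mnorm_nonneg[of Lp "y - x0"] by simp
    have "mnorm Ls (F y - F x0) \<le> P (mnorm Lp y, mnorm Lp (y - x0))"
      using lip[of y x0] by (simp add: P_def)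
    also have "\<dots> \<le> B" using B[of "P (mnorm Lp y, mnorm Lp (y - x0))"] m1 m2 by force
    finally have "mnorm Ls (F y - F x0) \<le> max B 0" by simp
    then have "norm (F y - F x0) \<le> nsq * max B 0"
      using norm_le_mnorm[of "F y - F x0" Ls] nsq1 unfolding nsq_def
      by (meson order_trans mult_left_mono of_nat_0_le_iff zero_le_mult_iff)
    then show ?thesis using norm_triangle_sub[of "F y" "F x0"] by (simp add: B1_def)
  qed
  define \<delta> where "\<delta> = min \<delta>0 (min 1 (1 / (2 * nsq^3 * (B1 + 1))))"
  have dpos: "\<delta> > 0" using d0pos B1pos nsq1 by (simp add: \<delta>_def)
  define D where "D = DIM(real^'n^'n)"
  have Dnsq: "real D = nsq" by (simp add: D_def nsq_def)
  define C1 where "C1 = (1 / (2*nsq^3)) powr nsq / (nsq * R) powr K'"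
  have C1pos: "C1 > 0" using nsq1 R1 by (simp add: C1_def)
  have key: "ennreal (C1 / dist y x0 ^ D) \<le> ennreal (mnorm L (matrix_inv y - F y) powr K / mnorm L y powr K')"
    if yinv: "invertible y" and yb: "y \<in> ball x0 \<delta> - {x0}" for y
  proof -
    define d where "d = dist y x0"
    have dnorm: "d = norm (y - x0)" by (simp add: d_def dist_norm)
    have dp: "d > 0" using yb by (simp add: d_def)
    have dl: "d < \<delta>" using yb by (simp add: d_def dist_commute)
    define Y where "Y = matrix_inv y"
    have vY: "v = Y *v ((y - x0) *v v)"
      using matrix_inv_left'[OF yinv] v(2)
      by (simp add: Y_def matrix_vector_mul_assoc matrix_vector_mult_diff_rdistrib)
    have "norm v \<le> nsq * norm Y * norm ((y - x0) *v v)"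
      using mv_le[of Y "(y - x0) *v v"] vY by (simp add: nsq_def)
    also have "\<dots> \<le> nsq * norm Y * (nsq * d * norm v)"
      using mv_le[of "y - x0" v] nsq1 by (intro mult_left_mono) (simp_all add: nsq_def dnorm)
    finally have "1 * norm v \<le> (nsq * nsq * norm Y * d) * norm v" by (simp add: algebra_simps)
    then have one: "1 \<le> nsq * nsq * norm Y * d" using nvpos by (simp only: mult_le_cancel_right)
    have yne0: "y \<noteq> 0"
    proof
      assume "y = 0"
      have "(y - x0) *v v = y *v v - x0 *v v" by (rule matrix_vector_mult_diff_rdistrib)
      also have "\<dots> = 0" using \<open>y = 0\<close> v(2) by (simp add: matrix_vector_mult_def vec_eq_iff)
      finally have "(y - x0) *v v = 0" .
      then show False using vY v(1) by simp
    qed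
    have d1: "d < 1" using dl by (simp add: \<delta>_def)
    have d2: "d < 1 / (2 * nsq^3 * (B1 + 1))" using dl by (simp add: \<delta>_def)
    have Qpos: "0 < 2 * nsq^3 * (B1 + 1)" using B1pos nsq1 by simp
    have d2': "2 * nsq^3 * (B1 + 1) * d < 1"
      using d2 pos_less_divide_eq[OF Qpos, of d 1] by (simp add: mult.commute)
    have FB: "norm (F y) \<le> B1" using Fb[of y] d1 dnorm by simp
    have "B1 * (2 * nsq * nsq * d) \<le> 2 * nsq^3 * (B1 + 1) * d"
    proof -
      have "B1 * (2 * nsq * nsq * d) \<le> (B1 + 1) * (2 * nsq * nsq * d)"
        using dp nsq1 by (intro mult_right_mono) auto
      also have "\<dots> \<le> (B1 + 1) * (2 * nsq * nsq * d) * nsq"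
        using mult_left_mono[OF nsq1, of "(B1 + 1) * (2 * nsq * nsq * d)"] dp nsq1 B1pos by simp
      finally show ?thesis by (simp add: power3_eq_cube algebra_simps)
    qed
    then have B1le: "B1 * (2 * nsq * nsq * d) \<le> 1" using d2' by linarith
    have "1 / (2 * nsq * nsq * d) \<le> norm Y - B1"
    proof -
      have "1 \<le> 2 * nsq * nsq * d * norm Y - B1 * (2 * nsq * nsq * d)" using one B1le by (simp add: algebra_simps)
      then show ?thesis using dp nsq1 by (simp add: field_simps)
    qed
    also have "norm Y - B1 \<le> norm (Y - F y)" using norm_triangle_ineq2[of Y "F y"] FB by linarith
    finally have nYF: "1 / (2 * nsq * nsq * d) \<le> norm (Y - F y)" .
    define e where "e = 1 / (2 * nsq^3 * d)"
    have epos: "e > 0" using dp nsq1 by (simp add: e_def)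
    have e1: "1 \<le> e"
    proof -
      have "2 * nsq^3 * d \<le> 2 * nsq^3 * (B1 + 1) * d" using B1pos dp nsq1 by (simp add: mult_le_cancel_left1 mult.assoc)
      then have "2 * nsq^3 * d < 1" using d2' by linarith
      then show ?thesis using dp nsq1 by (simp add: e_def field_simps)
    qed
    have "e = (1 / (2 * nsq * nsq * d)) / nsq" by (simp add: e_def power3_eq_cube)
    also have "\<dots> \<le> norm (Y - F y) / nsq" using nYF nsq1 by (intro divide_right_mono) auto
    also have "norm (Y - F y) / nsq \<le> mnorm L (Y - F y)"
      using norm_le_mnorm[of "Y - F y" L] nsq1 by (simp add: nsq_def field_simps)
    finally have eY: "e \<le> mnorm L (Y - F y)" .
    have "e powr nsq \<le> e powr K" using e1 Knsq by (rule powr_mono[rotated])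
    also have "\<dots> \<le> mnorm L (Y - F y) powr K" using eY epos Knsq nsq1 by (intro powr_mono2) auto
    finally have num: "e powr nsq \<le> mnorm L (Y - F y) powr K" .
    have ny: "norm y \<le> R" using norm_triangle_sub[of y x0] d1 dnorm by (simp add: R_def)
    have "0 < norm y / nsq" using yne0 nsq1 by simp
    also have "norm y / nsq \<le> mnorm L y"
      using norm_le_mnorm[of y L] nsq1 by (simp add: nsq_def field_simps)
    finally have mypos: "0 < mnorm L y" .
    have "mnorm L y \<le> nsq * R"
      using mnorm_le[of L y] ny nsq1 unfolding nsq_def
      by (meson order_trans mult_left_mono of_nat_0_le_iff zero_le_mult_iff)
    then have den: "mnorm L y powr K' \<le> (nsq * R) powr K'"
      using mypos K'_ge by (intro powr_mono2) auto
    have denpos: "0 < mnorm L y powr K'" using mypos by simp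
    have "e powr nsq = (1 / (2*nsq^3)) powr nsq / d powr nsq"
      by (simp add: e_def powr_divide powr_mult[symmetric] field_simps)
    also have "d powr nsq = d ^ D" using dp Dnsq powr_realpow[of d D] by simp
    finally have eq: "C1 / d ^ D = e powr nsq / (nsq * R) powr K'"
      by (simp add: C1_def)
    have "C1 / d ^ D \<le> mnorm L (Y - F y) powr K / mnorm L y powr K'"
      unfolding eq by (rule frac_le[OF _ num denpos den]) simp
    then show ?thesis unfolding Y_def d_def by (rule ennreal_leI)
  qed
  have null: "{x::real^'n^'n. \<not> invertible x} \<in> null_sets lebesgue"
    using neg_sing negligible_iff_null_sets by blast
  have "(\<integral>\<^sup>+ x. ennreal (C1 / dist x x0 ^ DIM(real^'n^'n)) * indicator (ball x0 \<delta> - {x0}) x \<partial>lebesgue)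
        \<le> (\<integral>\<^sup>+ x \<in> (M - {x\<in>M. \<not> invertible x}).
              ennreal (mnorm L (matrix_inv x - F x) powr K / mnorm L x powr K') \<partial>lebesgue)"
  proof (rule nn_integral_mono_AE)
    show "AE x in lebesgue. ennreal (C1 / dist x x0 ^ DIM(real^'n^'n)) * indicator (ball x0 \<delta> - {x0}) x
        \<le> ennreal (mnorm L (matrix_inv x - F x) powr K / mnorm L x powr K') * indicator (M - {x\<in>M. \<not> invertible x}) x"
      using AE_not_in[OF null]
    proof eventually_elim
      case (elim x)
      show ?case
      proof (cases "x \<in> ball x0 \<delta> - {x0}")
        case True
        have "norm (x - x0) < \<delta>0" using True by (simp add: \<delta>_def dist_norm norm_minus_commute)
        then have "x \<in> M" by (rule inM)
        with True elim show ?thesis using key[of x] by (simp add: D_def indicator_def)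
      qed simp
    qed
  qed
  then have inf: "(\<integral>\<^sup>+ x \<in> (M - {x\<in>M. \<not> invertible x}).
              ennreal (mnorm L (matrix_inv x - F x) powr K / mnorm L x powr K') \<partial>lebesgue) = \<infinity>"
    using ball_integral_inf[OF dpos C1pos, of x0] by (simp add: top_unique)
  have "emeasure lebesgue M = ennreal (measure lebesgue M)"
    using M_fin by (simp add: emeasure_eq_ennreal_measure)
  then have "measure lebesgue M > 0" using M_pos by simp
  then show ?thesis unfolding inf by (simp add: ennreal_mult_top)
qed

end
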